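(* Let $d\ge 2$, $2\le k\le d+1$, and let $y_1,\dots,y_N\in\{1,\dots,k\}$ be labels (the dataset may be class-balanced or class-imbalanced). Let $s>0$ and, for each $i$, let $\alpha_{i1}\ge\frac12$, $\alpha_{i2}\le\alpha_{i1}$, $\beta_{i1},\beta_{i2}\in\mathbb R$. For $\boldsymbol w_1,\dots,\boldsymbol w_k,\boldsymbol z_1,\dots,\boldsymbol z_N\in\mathbb S^{d-1}$ define the GM-Softmax empirical risk $$L=\frac1N\sum_{i=1}^N-\log\frac{\exp(s(\alpha_{i1}\boldsymbol w_{y_i}^{\mathrm T}\boldsymbol z_i+\beta_{i1}))}{\exp(s(\alpha_{i2}\boldsymbol w_{y_i}^{\mathrm T}\boldsymbol z_i+\beta_{i2}))+\sum_{j\ne y_i}\exp(s\boldsymbol w_j^{\mathrm T}\boldsymbol z_i)}.$$ Then for all such configurations satisfying $\sum_{j=1}^k\boldsymbol w_j=0$, $$L\ge\frac1N\sum_{i=1}^N\log\Big[\exp\big(s(\alpha_{i2}-\alpha_{i1}+\beta_{i2}-\beta_{i1})\big)+(k-1)\exp\big(-s(\tfrac1{k-1}+\alpha_{i1}+\beta_{i1})\big)\Big],$$ with equality if and only if $\boldsymbol w_i^{\mathrm T}\boldsymbol w_j=-\frac1{k-1}$ for all $i\ne j$ and $\boldsymbol z_i=\boldsymbol w_{y_i}$ for all $i$. Consequently the minimizers of $L$ subject to $\sum_j\boldsymbol w_j=0$ have the largest possible class margin $\arccos\frac{-1}{k-1}$ and the largest possible minimal sample margin $\frac{k}{k-1}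$.
   Context: $\mathbb S^{d-1}$ is the unit sphere in $\mathbb R^d$. Class margin: $m_c(\{\boldsymbol w_i\})=\arccos\big[\max_{i\ne j}\boldsymbol w_i^{\mathrm T}\boldsymbol w_j\big]$ for unit prototypes. Minimal sample margin: $\gamma_{\min}=\min_i\big(\boldsymbol w_{y_i}^{\mathrm T}\boldsymbol z_i-\max_{j\ne y_i}\boldsymbol w_j^{\mathrm T}\boldsymbol z_i\big)$. *)

theory Defs
  imports "HOL-Analysis.Analysis"
begin

text \<open>Classes are indexed by 1..k, samples by 1..N. Prototypes w j and features z i
  live in R^d = real^'d, with d = CARD('d).\<close>

definition gm_loss ::
  "real \<Rightarrow> (nat \<Rightarrow> real) \<Rightarrow> (nat \<Rightarrow> real) \<Rightarrow> (nat \<Rightarrow> real) \<Rightarrow> (nat \<Rightarrow> real)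
   \<Rightarrow> nat \<Rightarrow> nat \<Rightarrow> (nat \<Rightarrow> nat) \<Rightarrow> (nat \<Rightarrow> real^'d) \<Rightarrow> (nat \<Rightarrow> real^'d) \<Rightarrow> real" where
  "gm_loss s a1 a2 b1 b2 k N y w z =
     (1 / real N) * (\<Sum>i=1..N.
        - ln (exp (s * (a1 i * (w (y i) \<bullet> z i) + b1 i)) /
              (exp (s * (a2 i * (w (y i) \<bullet> z i) + b2 i))
               + (\<Sum>j\<in>{1..k} - {y i}. exp (s * (w j \<bullet> z i))))))"

definition gm_bound ::
  "real \<Rightarrow> (nat \<Rightarrow> real) \<Rightarrow> (nat \<Rightarrow> real) \<Rightarrow> (nat \<Rightarrow> real) \<Rightarrow> (nat \<Rightarrow> real)
   \<Rightarrow> nat \<Rightarrow> nat \<Rightarrow> real" where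
  "gm_bound s a1 a2 b1 b2 k N =
     (1 / real N) * (\<Sum>i=1..N.
        ln (exp (s * (a2 i - a1 i + b2 i - b1 i))
            + (real k - 1) * exp (- s * (1 / (real k - 1) + a1 i + b1 i))))"

definition class_margin :: "nat \<Rightarrow> (nat \<Rightarrow> real^'d) \<Rightarrow> real" where
  "class_margin k w =
     arccos (Max {w i \<bullet> w j | i j. i \<in> {1..k} \<and> j \<in> {1..k} \<and> i \<noteq> j})"

definition min_sample_margin ::
  "nat \<Rightarrow> nat \<Rightarrow> (nat \<Rightarrow> nat) \<Rightarrow> (nat \<Rightarrow> real^'d) \<Rightarrow> (nat \<Rightarrow> real^'d) \<Rightarrow> real" where
  "min_sample_margin k N y w z =
     Min {w (y i) \<bullet> z i - Max {w j \<bullet> z i | j. j \<in> {1..k} \<and> j \<noteq> y i} | i. i \<in> {1..N}}"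

definition feasible ::
  "nat \<Rightarrow> nat \<Rightarrow> (nat \<Rightarrow> real^'d) \<Rightarrow> (nat \<Rightarrow> real^'d) \<Rightarrow> bool" where
  "feasible k N w z \<longleftrightarrow>
     (\<forall>j\<in>{1..k}. norm (w j) = 1) \<and> (\<forall>i\<in>{1..N}. norm (z i) = 1)
     \<and> (\<Sum>j=1..k. w j) = 0"

end

theory Submission
  imports Defs
begin

lemma exp_strict:
  fixes t :: real assumes "t \<noteq> 0" shows "1 + t < exp t"
proof (cases "1 + t/2 \<ge> 0")
  case True
  have "(1 + t/2)^2 \<le> (exp (t/2))^2"
    using True exp_ge_add_one_self[of "t/2"] by (intro power_mono) simp_all
  also have "(exp (t/2))^2 = exp t" by (simp add: power2_eq_square flip: exp_add)
  finally have h: "(1 + t/2)^2 \<le> exp t" .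
  have "0 < t * t" using assms by (simp add: zero_less_mult_iff) (metis linorder_neqE_linordered_idom)
  then have "1 + t < (1 + t/2)^2" by (simp add: power2_eq_square algebra_simps)
  with h show ?thesis by linarith
next
  case False
  then have "1 + t < 0" by linarith
  moreover have "0 < exp t" by simp
  ultimately show ?thesis by linarith
qed

lemma exp_tangent:
  fixes x m :: real
  shows "exp m * (1 + (x - m)) \<le> exp x"
    and "x \<noteq> m \<Longrightarrow> exp m * (1 + (x - m)) < exp x"
proof -
  have e: "exp x = exp m * exp (x - m)" by (simp flip: exp_add)
  show "exp m * (1 + (x - m)) \<le> exp x"
    unfolding e by (intro mult_left_mono) simp_all
  show "x \<noteq> m \<Longrightarrow> exp m * (1 + (x - m)) < exp x"
    unfolding e using exp_strict[of "x - m"] by (intro mult_strict_left_mono) simp_all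
qed

lemma jensen_exp:
  fixes x :: "nat \<Rightarrow> real"
  assumes fin: "finite J" and ne: "J \<noteq> {}"
  defines "m \<equiv> (\<Sum>j\<in>J. x j) / real (card J)"
  shows "real (card J) * exp m \<le> (\<Sum>j\<in>J. exp (x j))"
    and "(\<Sum>j\<in>J. exp (x j)) = real (card J) * exp m \<Longrightarrow> (\<forall>j\<in>J. x j = m)"
proof -
  have cpos: "real (card J) > 0" using fin ne by (simp add: card_gt_0_iff)
  have s1: "(\<Sum>j\<in>J. (1 + (x j - m))) = real (card J) + (\<Sum>j\<in>J. x j) - real (card J) * m"
    by (simp add: sum.distrib sum_subtractf)
  also have "\<dots> = real (card J)" using cpos by (simp add: m_def)
  finally have s2: "(\<Sum>j\<in>J. (1 + (x j - m))) = real (card J)" .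
  have key: "(\<Sum>j\<in>J. exp m * (1 + (x j - m))) = real (card J) * exp m"
    by (simp add: s2 flip: sum_distrib_left)
  show "real (card J) * exp m \<le> (\<Sum>j\<in>J. exp (x j))"
    unfolding key[symmetric] by (intro sum_mono exp_tangent(1))
  assume eq: "(\<Sum>j\<in>J. exp (x j)) = real (card J) * exp m"
  define f where "f j = exp (x j) - exp m * (1 + (x j - m))" for j
  have f0: "\<forall>j\<in>J. 0 \<le> f j" using exp_tangent(1) by (simp add: f_def)
  have "sum f J = 0" using eq key by (simp add: f_def sum_subtractf)
  then have "\<forall>j\<in>J. f j = 0" using sum_nonneg_eq_0_iff[OF fin] f0 by blast
  then show "\<forall>j\<in>J. x j = m" using exp_tangent(2) by (force simp: f_def)
qed

lemma scalar_bound: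
  fixes J :: "nat set" and v :: "nat \<Rightarrow> real" and k :: nat and bq bp :: real
  assumes fin: "finite J" and cJ: "card J = k - 1" and k2: "2 \<le> k"
    and sv: "sum v J = - c" and c1: "c \<le> 1" and s: "s > 0" and a1: "a1 \<ge> 1/2" and a2: "a2 \<le> a1"
  defines "L0 \<equiv> - ln (exp (s * (a1 * c + bq)) / (exp (s * (a2 * c + bp)) + (\<Sum>j\<in>J. exp (s * v j))))"
    and "B0 \<equiv> ln (exp (s * (a2 - a1 + bp - bq)) + (real k - 1) * exp (- s * (1 / (real k - 1) + a1 + bq)))"
  shows "B0 \<le> L0" and "L0 = B0 \<longleftrightarrow> c = 1 \<and> (\<forall>j\<in>J. v j = - 1 / (real k - 1))"
proof -
  define K where "K = real k - 1"
  have K1: "K \<ge> 1" using k2 by (simp add: K_def)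
  have cardK: "real (card J) = K" using cJ k2 by (simp add: K_def of_nat_diff)
  have Jne: "J \<noteq> {}" using cJ k2 by auto
  define E1 where "E1 = exp (s * (a1 * c + bq))"
  define D where "D = exp (s * (a2 * c + bp)) + (\<Sum>j\<in>J. exp (s * v j))"
  define P where "P = exp (s * ((a2 - a1) * c + bp - bq))"
  define x where "x j = s * v j - s * (a1 * c + bq)" for j
  define T where "T = P + (\<Sum>j\<in>J. exp (x j))"
  define m where "m = (\<Sum>j\<in>J. x j) / real (card J)"
  have sx: "(\<Sum>j\<in>J. x j) = - s * c - K * (s * (a1 * c + bq))"
    by (simp add: x_def sum_subtractf cardK sv flip: sum_distrib_left)
  have m_eq: "m = - s * c / K - s * (a1 * c + bq)"
    using K1 by (simp add: m_def sx cardK field_simps)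
  have Pe: "P = exp (s * (a2 * c + bp)) / E1"
  proof -
    have "s * ((a2 - a1) * c + bp - bq) = s * (a2 * c + bp) - s * (a1 * c + bq)" by algebra
    then show ?thesis by (simp add: P_def E1_def exp_diff)
  qed
  have xe: "exp (x j) = exp (s * v j) / E1" for j by (simp add: x_def E1_def exp_diff)
  have TE: "T = D / E1"
    by (simp add: T_def D_def Pe xe add_divide_distrib sum_divide_distrib)
  have E1pos: "E1 > 0" by (simp add: E1_def)
  have Dpos: "D > 0" unfolding D_def by (intro add_pos_nonneg) (simp_all add: sum_nonneg)
  have Tpos: "T > 0" using TE E1pos Dpos by simp
  have L0T: "L0 = ln T"
    using E1pos Dpos by (simp add: L0_def TE ln_div flip: E1_def D_def)
  define Bd where "Bd = exp (s * (a2 - a1 + bp - bq)) + K * exp (- s * (1 / K + a1 + bq))"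
  have B0Bd: "B0 = ln Bd" by (simp add: B0_def Bd_def K_def)
  have Bdpos: "Bd > 0" using K1 by (simp add: Bd_def add_pos_pos)
  have st1: "K * exp m \<le> (\<Sum>j\<in>J. exp (x j))"
    using jensen_exp(1)[OF fin Jne, of x] by (simp add: m_def cardK)
  have P1: "exp (s * (a2 - a1 + bp - bq)) \<le> P"
  proof -
    have "0 \<le> (a2 - a1) * (c - 1)" using a2 c1 by (intro mult_nonpos_nonpos) simp_all
    then have "(a2 - a1) \<le> (a2 - a1) * c" by (simp add: algebra_simps)
    then have "s * (a2 - a1 + bp - bq) \<le> s * ((a2 - a1) * c + bp - bq)"
      using s by (intro mult_left_mono) simp_all
    then show ?thesis by (simp add: P_def)
  qed
  have mdiff: "m - (- s * (1 / K + a1 + bq)) = s * ((1 - c) * (1 / K + a1))"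
    using K1 by (simp add: m_eq field_simps)
  have pos1: "1 / K + a1 > 0" using K1 a1
    by (simp add: add_pos_nonneg)
  have Q: "- s * (1 / K + a1 + bq) \<le> m"
  proof -
    have "0 \<le> s * ((1 - c) * (1 / K + a1))" using s c1 pos1 by simp
    then show ?thesis using mdiff by linarith
  qed
  have Qs: "- s * (1 / K + a1 + bq) < m" if "c < 1"
  proof -
    have "0 < s * ((1 - c) * (1 / K + a1))" using s that pos1 by simp
    then show ?thesis using mdiff by linarith
  qed
  have main: "Bd \<le> T"
  proof -
    have "K * exp (- s * (1 / K + a1 + bq)) \<le> K * exp m" using Q K1 by simp
    then show ?thesis using P1 st1 by (simp add: Bd_def T_def)
  qed
  show "B0 \<le> L0" using main Bdpos Tpos by (simp add: L0T B0Bd)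
  have "L0 = B0 \<longleftrightarrow> T = Bd" using Bdpos Tpos by (simp add: L0T B0Bd)
  also have "\<dots> \<longleftrightarrow> c = 1 \<and> (\<forall>j\<in>J. v j = - 1 / (real k - 1))"
  proof
    assume eq: "T = Bd"
    have c_eq: "c = 1"
    proof (rule ccontr)
      assume "c \<noteq> 1" then have "c < 1" using c1 by simp
      then have "K * exp (- s * (1 / K + a1 + bq)) < K * exp m" using Qs K1 by simp
      then have "Bd < T" using P1 st1 by (simp add: Bd_def T_def)
      then show False using eq by simp
    qed
    have Pc: "P = exp (s * (a2 - a1 + bp - bq))" by (simp add: P_def c_eq)
    have mc: "m = - s * (1 / K + a1 + bq)" using mdiff c_eq by simp
    have "(\<Sum>j\<in>J. exp (x j)) = K * exp (- s * (1 / K + a1 + bq))"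
      using eq unfolding T_def Bd_def Pc by linarith
    then have "(\<Sum>j\<in>J. exp (x j)) = real (card J) * exp m"
      unfolding mc cardK .
    then have "\<forall>j\<in>J. x j = m" using jensen_exp(2)[OF fin Jne, of x] unfolding m_def by blast
    have "v j = - 1 / K" if "j \<in> J" for j
    proof -
      have "s * v j - s * (a1 * c + bq) = - s * (1 / K + a1 + bq)"
        using \<open>\<forall>j\<in>J. x j = m\<close> that by (simp add: x_def mc)
      then have "s * v j = s * (- 1 / K)" using c_eq by (simp add: algebra_simps)
      then show ?thesis using s by (metis mult_cancel_left less_irrefl)
    qed
    then have "\<forall>j\<in>J. v j = - 1 / K" by blast
    then show "c = 1 \<and> (\<forall>j\<in>J. v j = - 1 / (real k - 1))" using c_eq by (simp add: K_def)
  next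
    assume h: "c = 1 \<and> (\<forall>j\<in>J. v j = - 1 / (real k - 1))"
    have xj: "\<forall>j\<in>J. x j = - s * (1 / K + a1 + bq)"
    proof
      fix j assume "j \<in> J"
      then have "v j = - 1 / K" using h by (simp add: K_def)
      then show "x j = - s * (1 / K + a1 + bq)" using h by (simp add: x_def algebra_simps)
    qed
    have "(\<Sum>j\<in>J. exp (x j)) = K * exp (- s * (1 / K + a1 + bq))"
      using xj by (simp add: cardK)
    moreover have "P = exp (s * (a2 - a1 + bp - bq))" using h by (simp add: P_def)
    ultimately show "T = Bd" by (simp add: T_def Bd_def)
  qed
  finally show "L0 = B0 \<longleftrightarrow> c = 1 \<and> (\<forall>j\<in>J. v j = - 1 / (real k - 1))" .
qed

lemma unit_inner_eq_1:
  fixes u v :: "'a::real_inner"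
  assumes "norm u = 1" "norm v = 1"
  shows "u \<bullet> v = 1 \<longleftrightarrow> v = u"
proof
  assume h: "u \<bullet> v = 1"
  have uu: "u \<bullet> u = 1" "v \<bullet> v = 1" using assms by (simp_all add: norm_eq_1)
  have "(v - u) \<bullet> (v - u) = v \<bullet> v - 2 * (u \<bullet> v) + u \<bullet> u"
    by (simp add: inner_diff_left inner_diff_right inner_commute)
  also have "\<dots> = 0" using uu h by simp
  finally show "v = u" by simp
next
  assume "v = u" then show "u \<bullet> v = 1" using assms by (simp add: norm_eq_1)
qed

lemma sample_bound:
  fixes w :: "nat \<Rightarrow> real^'d" and z :: "real^'d" and k :: nat and y :: nat
    and s a1 a2 bq bp :: real
  assumes k2: "2 \<le> k" and y: "y \<in> {1..k}" and wn: "\<forall>j\<in>{1..k}. norm (w j) = 1"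
    and zn: "norm z = 1" and ws: "(\<Sum>j=1..k. w j) = 0"
    and s: "s > 0" and a1: "a1 \<ge> 1/2" and a2: "a2 \<le> a1"
  shows "ln (exp (s * (a2 - a1 + bp - bq)) + (real k - 1) * exp (- s * (1 / (real k - 1) + a1 + bq)))
      \<le> - ln (exp (s * (a1 * (w y \<bullet> z) + bq)) / (exp (s * (a2 * (w y \<bullet> z) + bp))
              + (\<Sum>j\<in>{1..k} - {y}. exp (s * (w j \<bullet> z)))))"
   and "(- ln (exp (s * (a1 * (w y \<bullet> z) + bq)) / (exp (s * (a2 * (w y \<bullet> z) + bp))
              + (\<Sum>j\<in>{1..k} - {y}. exp (s * (w j \<bullet> z)))))
        = ln (exp (s * (a2 - a1 + bp - bq)) + (real k - 1) * exp (- s * (1 / (real k - 1) + a1 + bq))))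
     \<longleftrightarrow> z = w y \<and> (\<forall>j\<in>{1..k} - {y}. w j \<bullet> w y = - 1 / (real k - 1))"
proof -
  define J where "J = {1..k} - {y}"
  have fin: "finite J" by (simp add: J_def)
  have cJ: "card J = k - 1" using y by (simp add: J_def)
  have "0 = (\<Sum>j=1..k. w j) \<bullet> z" using ws by simp
  also have "\<dots> = (\<Sum>j\<in>{1..k}. w j \<bullet> z)" by (simp add: inner_sum_left)
  also have "\<dots> = w y \<bullet> z + (\<Sum>j\<in>J. w j \<bullet> z)"
    unfolding J_def using y by (intro sum.remove) simp_all
  finally have sv: "(\<Sum>j\<in>J. w j \<bullet> z) = - (w y \<bullet> z)" by linarith
  have wy: "norm (w y) = 1" using wn y by blast
  have c1: "w y \<bullet> z \<le> 1" using norm_cauchy_schwarz[of "w y" z] wy zn by simp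
  note sb = scalar_bound[OF fin cJ k2 sv c1 s a1 a2, where bq=bq and bp=bp]
  show "ln (exp (s * (a2 - a1 + bp - bq)) + (real k - 1) * exp (- s * (1 / (real k - 1) + a1 + bq)))
      \<le> - ln (exp (s * (a1 * (w y \<bullet> z) + bq)) / (exp (s * (a2 * (w y \<bullet> z) + bp))
              + (\<Sum>j\<in>{1..k} - {y}. exp (s * (w j \<bullet> z)))))"
    using sb(1) unfolding J_def .
  have e2: "(w y \<bullet> z = 1 \<and> (\<forall>j\<in>J. w j \<bullet> z = - 1 / (real k - 1)))
      \<longleftrightarrow> z = w y \<and> (\<forall>j\<in>J. w j \<bullet> w y = - 1 / (real k - 1))"
  proof (cases "z = w y")
    case True
    have "w y \<bullet> w y = 1" using wy by (simp add: norm_eq_1)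
    then show ?thesis using True by simp
  next
    case False
    then have "w y \<bullet> z \<noteq> 1" using unit_inner_eq_1[OF wy zn] by blast
    then show ?thesis using False by blast
  qed
  show "(- ln (exp (s * (a1 * (w y \<bullet> z) + bq)) / (exp (s * (a2 * (w y \<bullet> z) + bp))
              + (\<Sum>j\<in>{1..k} - {y}. exp (s * (w j \<bullet> z)))))
        = ln (exp (s * (a2 - a1 + bp - bq)) + (real k - 1) * exp (- s * (1 / (real k - 1) + a1 + bq))))
     \<longleftrightarrow> z = w y \<and> (\<forall>j\<in>{1..k} - {y}. w j \<bullet> w y = - 1 / (real k - 1))"
    using trans[OF sb(2) e2] unfolding J_def .
qed

lemma sum_le_eq_iff:
  fixes f g :: "nat \<Rightarrow> real"
  assumes "finite A" "\<forall>i\<in>A. f i \<le> g i"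
  shows "sum f A = sum g A \<longleftrightarrow> (\<forall>i\<in>A. f i = g i)"
proof
  assume "sum f A = sum g A"
  then have "sum (\<lambda>i. g i - f i) A = 0" by (simp add: sum_subtractf)
  then have "\<forall>i\<in>A. g i - f i = 0" using sum_nonneg_eq_0_iff[OF assms(1), of "\<lambda>i. g i - f i"] assms(2) by simp
  then show "\<forall>i\<in>A. f i = g i" by simp
next
  assume "\<forall>i\<in>A. f i = g i"
  then show "sum f A = sum g A" by (intro sum.cong) auto
qed

lemma part1:
  fixes w :: "nat \<Rightarrow> real^'d" and z :: "nat \<Rightarrow> real^'d"
    and s :: real and k N :: nat and y :: "nat \<Rightarrow> nat" and a1 a2 b1 b2 :: "nat \<Rightarrow> real"
  assumes k2: "2 \<le> k" and N1: "1 \<le> N"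
    and labels: "\<forall>i\<in>{1..N}. y i \<in> {1..k}"
    and classes_nonempty: "\<forall>c\<in>{1..k}. \<exists>i\<in>{1..N}. y i = c"
    and s_pos: "s > 0"
    and a1_ge: "\<forall>i\<in>{1..N}. a1 i \<ge> 1/2"
    and a2_le: "\<forall>i\<in>{1..N}. a2 i \<le> a1 i"
    and F: "feasible k N w z"
  shows "gm_bound s a1 a2 b1 b2 k N \<le> gm_loss s a1 a2 b1 b2 k N y w z"
    and "gm_loss s a1 a2 b1 b2 k N y w z = gm_bound s a1 a2 b1 b2 k N \<longleftrightarrow>
             (\<forall>i\<in>{1..k}. \<forall>j\<in>{1..k}. i \<noteq> j \<longrightarrow> w i \<bullet> w j = - 1 / (real k - 1))
             \<and> (\<forall>i\<in>{1..N}. z i = w (y i))"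
proof -
  define Lf where "Lf i = - ln (exp (s * (a1 i * (w (y i) \<bullet> z i) + b1 i)) /
              (exp (s * (a2 i * (w (y i) \<bullet> z i) + b2 i))
               + (\<Sum>j\<in>{1..k} - {y i}. exp (s * (w j \<bullet> z i)))))" for i
  define Bf where "Bf i = ln (exp (s * (a2 i - a1 i + b2 i - b1 i))
            + (real k - 1) * exp (- s * (1 / (real k - 1) + a1 i + b1 i)))" for i
  have loss: "gm_loss s a1 a2 b1 b2 k N y w z = (1 / real N) * sum Lf {1..N}"
    unfolding gm_loss_def Lf_def by (rule refl)
  have bnd: "gm_bound s a1 a2 b1 b2 k N = (1 / real N) * sum Bf {1..N}"
    unfolding gm_bound_def Bf_def by (rule refl)
  have wn: "\<forall>j\<in>{1..k}. norm (w j) = 1" and zn: "\<forall>i\<in>{1..N}. norm (z i) = 1"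
    and ws: "(\<Sum>j=1..k. w j) = 0" using F by (simp_all add: feasible_def)
  have le: "\<forall>i\<in>{1..N}. Bf i \<le> Lf i"
  proof
    fix i assume i: "i \<in> {1..N}"
    have yi: "y i \<in> {1..k}" using i labels by blast
    have zi: "norm (z i) = 1" using i zn by blast
    have a1i: "a1 i \<ge> 1/2" using i a1_ge by blast
    have a2i: "a2 i \<le> a1 i" using i a2_le by blast
    show "Bf i \<le> Lf i"
      using sample_bound(1)[OF k2 yi wn zi ws s_pos a1i a2i, where bq="b1 i" and bp="b2 i"]
      unfolding Lf_def Bf_def by assumption
  qed
  have eqi: "\<forall>i\<in>{1..N}. (Lf i = Bf i \<longleftrightarrow> z i = w (y i)
       \<and> (\<forall>j\<in>{1..k} - {y i}. w j \<bullet> w (y i) = - 1 / (real k - 1)))"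
  proof
    fix i assume i: "i \<in> {1..N}"
    have yi: "y i \<in> {1..k}" using i labels by blast
    have zi: "norm (z i) = 1" using i zn by blast
    have a1i: "a1 i \<ge> 1/2" using i a1_ge by blast
    have a2i: "a2 i \<le> a1 i" using i a2_le by blast
    show "Lf i = Bf i \<longleftrightarrow> z i = w (y i)
       \<and> (\<forall>j\<in>{1..k} - {y i}. w j \<bullet> w (y i) = - 1 / (real k - 1))"
      using sample_bound(2)[OF k2 yi wn zi ws s_pos a1i a2i, where bq="b1 i" and bp="b2 i"]
      unfolding Lf_def Bf_def by assumption
  qed
  have Npos: "real N > 0" using N1 by simp
  show "gm_bound s a1 a2 b1 b2 k N \<le> gm_loss s a1 a2 b1 b2 k N y w z"
    unfolding loss bnd using Npos le by (intro mult_left_mono sum_mono) auto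
  have "gm_loss s a1 a2 b1 b2 k N y w z = gm_bound s a1 a2 b1 b2 k N \<longleftrightarrow> sum Lf {1..N} = sum Bf {1..N}"
    unfolding loss bnd using Npos by simp
  also have "\<dots> \<longleftrightarrow> sum Bf {1..N} = sum Lf {1..N}" by (rule eq_commute)
  also have "\<dots> \<longleftrightarrow> (\<forall>i\<in>{1..N}. Bf i = Lf i)"
    by (rule sum_le_eq_iff) (simp_all add: le)
  also have "\<dots> \<longleftrightarrow> (\<forall>i\<in>{1..N}. Lf i = Bf i)"
    by (intro ball_cong refl) (rule eq_commute)
  also have "\<dots> \<longleftrightarrow> (\<forall>i\<in>{1..N}. z i = w (y i)
       \<and> (\<forall>j\<in>{1..k} - {y i}. w j \<bullet> w (y i) = - 1 / (real k - 1)))"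
    using eqi by (intro ball_cong refl) blast
  also have "\<dots> \<longleftrightarrow> (\<forall>i\<in>{1..k}. \<forall>j\<in>{1..k}. i \<noteq> j \<longrightarrow> w i \<bullet> w j = - 1 / (real k - 1))
             \<and> (\<forall>i\<in>{1..N}. z i = w (y i))"
  proof
    assume h: "\<forall>i\<in>{1..N}. z i = w (y i)
       \<and> (\<forall>j\<in>{1..k} - {y i}. w j \<bullet> w (y i) = - 1 / (real k - 1))"
    have "w p \<bullet> w q = - 1 / (real k - 1)" if pq: "p \<in> {1..k}" "q \<in> {1..k}" "p \<noteq> q" for p q
    proof -
      obtain i where i: "i \<in> {1..N}" "y i = q" using classes_nonempty pq(2) by blast
      then show ?thesis using h pq by auto
    qed
    then show "(\<forall>i\<in>{1..k}. \<forall>j\<in>{1..k}. i \<noteq> j \<longrightarrow> w i \<bullet> w j = - 1 / (real k - 1))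
             \<and> (\<forall>i\<in>{1..N}. z i = w (y i))" using h by blast
  next
    assume h: "(\<forall>i\<in>{1..k}. \<forall>j\<in>{1..k}. i \<noteq> j \<longrightarrow> w i \<bullet> w j = - 1 / (real k - 1))
             \<and> (\<forall>i\<in>{1..N}. z i = w (y i))"
    then show "\<forall>i\<in>{1..N}. z i = w (y i)
       \<and> (\<forall>j\<in>{1..k} - {y i}. w j \<bullet> w (y i) = - 1 / (real k - 1))"
      using labels by auto
  qed
  finally show "gm_loss s a1 a2 b1 b2 k N y w z = gm_bound s a1 a2 b1 b2 k N \<longleftrightarrow>
             (\<forall>i\<in>{1..k}. \<forall>j\<in>{1..k}. i \<noteq> j \<longrightarrow> w i \<bullet> w j = - 1 / (real k - 1))
             \<and> (\<forall>i\<in>{1..N}. z i = w (y i))" .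
qed

lemma etf_exists:
  assumes k2: "2 \<le> k" and kd: "k \<le> CARD('d) + 1"
  shows "\<exists>w :: nat \<Rightarrow> real^'d. (\<forall>j\<in>{1..k}. norm (w j) = 1) \<and> (\<Sum>j=1..k. w j) = 0
          \<and> (\<forall>i\<in>{1..k}. \<forall>j\<in>{1..k}. i \<noteq> j \<longrightarrow> w i \<bullet> w j = - 1 / (real k - 1))"
proof -
  define m where "m = k - 1"
  have m1: "1 \<le> m" and mle: "m \<le> CARD('d)" and km: "k = Suc m"
    using k2 kd by (auto simp: m_def)
  have mpos: "real m > 0" using m1 by simp
  have Km: "real k - 1 = real m" using km by simp
  obtain h where h: "bij_betw h {0..<CARD('d)} (UNIV :: 'd set)"
    using ex_bij_betw_nat_finite[of "UNIV :: 'd set"] by auto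
  have hinj: "inj_on h {0..<CARD('d)}" using h by (rule bij_betw_imp_inj_on)
  define e where "e j = (axis (h (j - 1)) (1::real) :: real^'d)" for j
  have ee: "e p \<bullet> e q = (if p = q then 1 else 0)" if "p \<in> {1..m}" "q \<in> {1..m}" for p q
  proof -
    have "h (p - 1) = h (q - 1) \<longleftrightarrow> p = q"
    proof
      assume "h (p - 1) = h (q - 1)"
      then have "p - 1 = q - 1" using hinj that mle by (auto dest: inj_onD)
      then show "p = q" using that by auto
    qed simp
    then show ?thesis by (simp add: e_def inner_axis_axis)
  qed
  define u where "u = (\<Sum>j=1..m. e j)"
  have eu: "e p \<bullet> u = 1" if "p \<in> {1..m}" for p
  proof -
    have "e p \<bullet> u = (\<Sum>q=1..m. e p \<bullet> e q)" by (simp add: u_def inner_sum_right)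
    also have "\<dots> = (\<Sum>q=1..m. if p = q then 1 else 0)"
      by (rule sum.cong) (use ee that in auto)
    also have "\<dots> = 1" using that by simp
    finally show ?thesis .
  qed
  have ue: "u \<bullet> e p = 1" if "p \<in> {1..m}" for p using eu[OF that] by (simp add: inner_commute)
  have uu: "u \<bullet> u = real m"
  proof -
    have "u \<bullet> u = (\<Sum>p=1..m. e p \<bullet> u)" by (simp add: u_def inner_sum_left)
    also have "\<dots> = (\<Sum>p=1..m. 1)" by (rule sum.cong) (use eu in auto)
    finally show ?thesis by simp
  qed
  define r where "r = sqrt (real m)"
  have r: "r > 0" "r * r = real m" using mpos by (simp_all add: r_def)
  define a where "a = sqrt ((real m + 1) / real m)"
  have a: "a * a = (real m + 1) / real m" using mpos by (simp add: a_def)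
  define b where "b = (1 / r - a) / real m"
  have ab: "a + real m * b = 1 / r" using mpos by (simp add: b_def)
  have ab3: "2 * a * b + real m * b * b = - 1 / real m"
  proof -
    have d1: "(1 / r - a) * (1 / r + a) = 1 / (r * r) - a * a" by (simp add: algebra_simps)
    have d: "(1 / r - a) * (1 / r + a) = - 1" unfolding d1 using mpos by (simp add: r a field_simps)
    have "2 * a * b + real m * b * b = b * (a + (a + real m * b))" by (simp add: algebra_simps)
    also have "\<dots> = b * (a + 1 / r)" by (simp add: ab)
    also have "\<dots> = (1 / r - a) * (1 / r + a) / real m" by (simp add: b_def algebra_simps)
    also have "\<dots> = - 1 / real m" by (simp add: d)
    finally show ?thesis .
  qed
  have ab2: "a * a + 2 * a * b + real m * b * b = 1"
  proof -
    have "a * a + 2 * a * b + real m * b * b = a * a + (2 * a * b + real m * b * b)" by simp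
    also have "\<dots> = (real m + 1) / real m + (- 1 / real m)" by (simp only: ab3 a)
    also have "\<dots> = 1" using mpos by (simp add: field_simps)
    finally show ?thesis .
  qed
  define w where "w j = (if j = k then (- (1 / r)) *\<^sub>R u else a *\<^sub>R e j + b *\<^sub>R u)" for j
  have wk: "w k = (- (1 / r)) *\<^sub>R u" by (simp add: w_def)
  have wj: "w j = a *\<^sub>R e j + b *\<^sub>R u" if "j \<in> {1..m}" for j
    using that km by (simp add: w_def)
  have inner_jj: "w p \<bullet> w q = (if p = q then 1 else - 1 / real m)" if "p \<in> {1..m}" "q \<in> {1..m}" for p q
  proof -
    have "w p \<bullet> w q = a * a * (e p \<bullet> e q) + a * b * (e p \<bullet> u) + b * a * (u \<bullet> e q) + b * b * (u \<bullet> u)"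
      using that by (simp add: wj inner_add_left inner_add_right algebra_simps)
    also have "\<dots> = a * a * (if p = q then 1 else 0) + 2 * a * b + real m * b * b"
      using that by (simp add: ee eu ue uu algebra_simps)
    finally show ?thesis using ab2 ab3 by (auto simp: algebra_simps)
  qed
  have inner_jk: "w p \<bullet> w k = - 1 / real m" if "p \<in> {1..m}" for p
  proof -
    have "w p \<bullet> w k = - (1 / r) * (a * (e p \<bullet> u) + b * (u \<bullet> u))"
      using that by (simp add: wj wk inner_add_left algebra_simps)
    also have "\<dots> = - (1 / r) * (1 / r)" using that ab by (simp add: eu uu algebra_simps)
    also have "\<dots> = - 1 / real m" using r by (simp add: field_simps)
    finally show ?thesis .
  qed
  have kk: "w k \<bullet> w k = 1"
  proof -
    have "w k \<bullet> w k = (1 / r) * (1 / r) * (u \<bullet> u)" by (simp add: wk)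
    also have "\<dots> = 1" using r mpos by (simp add: uu field_simps)
    finally show ?thesis .
  qed
  have kset: "{1..k} = insert k {1..m}" using km by auto
  have kn: "k \<notin> {1..m}" using km by simp
  show ?thesis
  proof (intro exI conjI ballI impI)
    fix j assume "j \<in> {1..k}"
    then have "j = k \<or> j \<in> {1..m}" using kset by blast
    then show "norm (w j) = 1" using inner_jj[of j j] kk by (auto simp: norm_eq_1)
  next
    have s0: "(\<Sum>j=1..k. w j) = w k + (\<Sum>j=1..m. w j)" using kset kn by simp
    have s1: "(\<Sum>j=1..m. w j) = (\<Sum>j=1..m. a *\<^sub>R e j + b *\<^sub>R u)"
      by (rule sum.cong) (simp_all add: wj)
    have s2: "(\<Sum>j=1..m. a *\<^sub>R e j + b *\<^sub>R u) = (\<Sum>j=1..m. a *\<^sub>R e j) + (\<Sum>j=1..m. b *\<^sub>R u)"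
      by (rule sum.distrib)
    have s3: "(\<Sum>j=1..m. a *\<^sub>R e j) = a *\<^sub>R u" by (simp add: u_def scaleR_sum_right)
    have s4: "(\<Sum>j=1..m. b *\<^sub>R u) = real (card {1..m}) *\<^sub>R (b *\<^sub>R u)"
      by (rule sum_constant_scaleR)
    have s5: "real (card {1..m}) *\<^sub>R (b *\<^sub>R u) = (real m * b) *\<^sub>R u" by simp
    have s6: "a *\<^sub>R u + (real m * b) *\<^sub>R u = (1 / r) *\<^sub>R u"
      by (simp add: ab flip: scaleR_add_left)
    show "(\<Sum>j=1..k. w j) = 0" unfolding s0 s1 s2 s3 s4 s5 s6 by (simp add: wk)
  next
    fix i j assume ij: "i \<in> {1..k}" "j \<in> {1..k}" "i \<noteq> j"
    then have i': "i = k \<or> i \<in> {1..m}" and j': "j = k \<or> j \<in> {1..m}" using kset by blast+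
    show "w i \<bullet> w j = - 1 / (real k - 1)"
      using i' j' ij(3) inner_jj[of i j] inner_jk[of i] inner_jk[of j]
      by (auto simp: Km inner_commute)
  qed
qed

lemma exists_ge_avg:
  fixes f :: "nat \<Rightarrow> real"
  assumes fin: "finite J" and ne: "J \<noteq> {}"
  shows "\<exists>j\<in>J. sum f J / real (card J) \<le> f j"
proof (rule ccontr)
  assume "\<not> ?thesis"
  then have lt: "\<forall>j\<in>J. f j < sum f J / real (card J)" by auto
  have cpos: "real (card J) > 0" using fin ne by (simp add: card_gt_0_iff)
  have "sum f J < (\<Sum>j\<in>J. sum f J / real (card J))"
    using lt by (intro sum_strict_mono[OF fin ne]) auto
  also have "\<dots> = sum f J" using cpos by simp
  finally show False by simp
qed

lemma part3:
  fixes w :: "nat \<Rightarrow> real^'d" and z :: "nat \<Rightarrow> real^'d" and k N :: nat and y :: "nat \<Rightarrow> nat"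
  assumes k2: "2 \<le> k" and N1: "1 \<le> N"
    and labels: "\<forall>i\<in>{1..N}. y i \<in> {1..k}"
    and F: "feasible k N w z"
  shows "class_margin k w \<le> arccos (- 1 / (real k - 1))"
    and "min_sample_margin k N y w z \<le> real k / (real k - 1)"
proof -
  define K where "K = real k - 1"
  have K1: "K \<ge> 1" using k2 by (simp add: K_def)
  have wn: "\<forall>j\<in>{1..k}. norm (w j) = 1" and zn: "\<forall>i\<in>{1..N}. norm (z i) = 1"
    and ws: "(\<Sum>j=1..k. w j) = 0" using F by (simp_all add: feasible_def)
  have rowsum: "(\<Sum>j\<in>{1..k} - {p}. w j \<bullet> x) = - (w p \<bullet> x)" if p: "p \<in> {1..k}" for p x
  proof -
    have "0 = (\<Sum>j=1..k. w j) \<bullet> x" using ws by simp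
    also have "\<dots> = (\<Sum>j\<in>{1..k}. w j \<bullet> x)" by (simp add: inner_sum_left)
    also have "\<dots> = w p \<bullet> x + (\<Sum>j\<in>{1..k} - {p}. w j \<bullet> x)"
      using p by (intro sum.remove) simp_all
    finally show ?thesis by linarith
  qed
  have cardJ: "card ({1..k} - {p}) = k - 1" if "p \<in> {1..k}" for p using that by simp
  have cardJr: "real (card ({1..k} - {p})) = K" if "p \<in> {1..k}" for p
    using cardJ[OF that] k2 by (simp add: K_def of_nat_diff)
  have Jne: "{1..k} - {p} \<noteq> {}" if "p \<in> {1..k}" for p
  proof
    assume e: "{1..k} - {p} = {}"
    have "card ({1..k} - {p}) = k - 1" using cardJ[OF that] .
    then have "(0::nat) = k - 1" unfolding e by simp
    then show False using k2 by linarith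
  qed
  define S where "S = {w i \<bullet> w j | i j. i \<in> {1..k} \<and> j \<in> {1..k} \<and> i \<noteq> j}"
  have S_eq: "S = (\<lambda>(i, j). w i \<bullet> w j) ` {(i, j). i \<in> {1..k} \<and> j \<in> {1..k} \<and> i \<noteq> j}"
    unfolding S_def by auto
  have Sfin: "finite S" unfolding S_eq
    by (rule finite_imageI) (rule finite_subset[of _ "{1..k} \<times> {1..k}"], auto)
  have one: "(1::nat) \<in> {1..k}" using k2 by simp
  obtain j where j: "j \<in> {1..k} - {1}" and jge: "(\<Sum>j\<in>{1..k} - {1}. w 1 \<bullet> w j) / real (card ({1..k} - {1})) \<le> w 1 \<bullet> w j"
    using exists_ge_avg[OF _ Jne[OF one], of "\<lambda>j. w 1 \<bullet> w j"] by blast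
  have "(\<Sum>j\<in>{1..k} - {1}. w 1 \<bullet> w j) = - 1"
  proof -
    have "(\<Sum>j\<in>{1..k} - {1}. w 1 \<bullet> w j) = (\<Sum>j\<in>{1..k} - {1}. w j \<bullet> w 1)"
      by (simp add: inner_commute)
    also have "\<dots> = - (w 1 \<bullet> w 1)" by (rule rowsum[OF one])
    also have "w 1 \<bullet> w 1 = 1" using wn one by (simp add: norm_eq_1)
    finally show ?thesis by simp
  qed
  then have jge': "- 1 / K \<le> w 1 \<bullet> w j" using jge cardJr[OF one] by simp
  have "w 1 \<bullet> w j \<in> S" using j one unfolding S_def by blast
  then have "w 1 \<bullet> w j \<le> Max S" by (rule Max_ge[OF Sfin])
  then have MaxS: "- 1 / K \<le> Max S" using jge' by linarith
  have "S \<noteq> {}" using \<open>w 1 \<bullet> w j \<in> S\<close> by blast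
  then have "Max S \<in> S" using Sfin by (rule Max_in[rotated])
  then obtain p q where pq: "p \<in> {1..k}" "q \<in> {1..k}" "Max S = w p \<bullet> w q" unfolding S_def by blast
  have "\<bar>w p \<bullet> w q\<bar> \<le> norm (w p) * norm (w q)" by (rule Cauchy_Schwarz_ineq2)
  then have absM: "\<bar>Max S\<bar> \<le> 1" using pq wn by simp
  have absK: "\<bar>- 1 / K\<bar> \<le> 1" using K1 by simp
  show "class_margin k w \<le> arccos (- 1 / (real k - 1))"
    unfolding class_margin_def using arccos_le_mono[OF absM absK] MaxS
    by (simp add: S_def K_def)
  have N1': "(1::nat) \<in> {1..N}" using N1 by simp
  define p where "p = y 1"
  have p: "p \<in> {1..k}" using labels N1' by (simp add: p_def)
  define c where "c = w p \<bullet> z 1"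
  have c1: "c \<le> 1" using norm_cauchy_schwarz[of "w p" "z 1"] wn zn p N1' by (simp add: c_def)
  obtain j2 where j2: "j2 \<in> {1..k} - {p}"
    and j2ge: "(\<Sum>j\<in>{1..k} - {p}. w j \<bullet> z 1) / real (card ({1..k} - {p})) \<le> w j2 \<bullet> z 1"
    using exists_ge_avg[OF _ Jne[OF p], of "\<lambda>j. w j \<bullet> z 1"] by blast
  have j2ge': "- c / K \<le> w j2 \<bullet> z 1" using j2ge rowsum[OF p, of "z 1"] cardJr[OF p]
    by (simp add: c_def)
  define T where "T = {w j \<bullet> z 1 | j. j \<in> {1..k} \<and> j \<noteq> y 1}"
  have T_eq: "T = (\<lambda>j. w j \<bullet> z 1) ` ({1..k} - {p})" unfolding T_def p_def by auto
  have "w j2 \<bullet> z 1 \<in> T" using j2 unfolding T_eq by blast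
  moreover have Tfin: "finite T" unfolding T_eq by simp
  ultimately have "w j2 \<bullet> z 1 \<le> Max T" by (intro Max_ge)
  then have MT: "- c / K \<le> Max T" using j2ge' by linarith
  have "c - Max T \<le> c + c / K" using MT by simp
  also have "\<dots> = c * (real k / K)" using K1 by (simp add: K_def field_simps)
  also have "\<dots> \<le> 1 * (real k / K)" using c1 K1 by (intro mult_right_mono) simp_all
  finally have bound1: "c - Max T \<le> real k / K" by simp
  define U where "U = {w (y i) \<bullet> z i - Max {w j \<bullet> z i | j. j \<in> {1..k} \<and> j \<noteq> y i} | i. i \<in> {1..N}}"
  have U_eq: "U = (\<lambda>i. w (y i) \<bullet> z i - Max {w j \<bullet> z i | j. j \<in> {1..k} \<and> j \<noteq> y i}) ` {1..N}"
    unfolding U_def by auto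
  have "c - Max T \<in> U" unfolding U_def T_def c_def p_def using N1' by blast
  moreover have "finite U" unfolding U_eq by simp
  ultimately have "Min U \<le> c - Max T" by (intro Min_le)
  then show "min_sample_margin k N y w z \<le> real k / (real k - 1)"
    using bound1 unfolding min_sample_margin_def by (simp add: U_def K_def)
qed

theorem theorem5:
  fixes s :: real and k N :: nat and y :: "nat \<Rightarrow> nat"
    and a1 a2 b1 b2 :: "nat \<Rightarrow> real"
  assumes d2: "CARD('d) \<ge> 2"
    and k2: "2 \<le> k" and kd: "k \<le> CARD('d) + 1"
    and N1: "1 \<le> N"
    and labels: "\<forall>i\<in>{1..N}. y i \<in> {1..k}"
    and classes_nonempty: "\<forall>c\<in>{1..k}. \<exists>i\<in>{1..N}. y i = c"
    and s_pos: "s > 0"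
    and a1_ge: "\<forall>i\<in>{1..N}. a1 i \<ge> 1/2"
    and a2_le: "\<forall>i\<in>{1..N}. a2 i \<le> a1 i"
  shows
    "(\<forall>(w :: nat \<Rightarrow> real^'d) z. feasible k N w z \<longrightarrow>
        gm_loss s a1 a2 b1 b2 k N y w z \<ge> gm_bound s a1 a2 b1 b2 k N
        \<and> (gm_loss s a1 a2 b1 b2 k N y w z = gm_bound s a1 a2 b1 b2 k N \<longleftrightarrow>
             (\<forall>i\<in>{1..k}. \<forall>j\<in>{1..k}. i \<noteq> j \<longrightarrow> w i \<bullet> w j = - 1 / (real k - 1))
             \<and> (\<forall>i\<in>{1..N}. z i = w (y i))))
     \<and> (\<forall>(w :: nat \<Rightarrow> real^'d) z.
          feasible k N w z
          \<and> (\<forall>(w' :: nat \<Rightarrow> real^'d) z'. feasible k N w' z' \<longrightarrow>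
               gm_loss s a1 a2 b1 b2 k N y w z \<le> gm_loss s a1 a2 b1 b2 k N y w' z')
          \<longrightarrow> class_margin k w = arccos (- 1 / (real k - 1))
              \<and> min_sample_margin k N y w z = real k / (real k - 1))
     \<and> (\<forall>(w :: nat \<Rightarrow> real^'d) z. feasible k N w z \<longrightarrow>
          class_margin k w \<le> arccos (- 1 / (real k - 1))
          \<and> min_sample_margin k N y w z \<le> real k / (real k - 1))"
proof -
  have P1: "gm_bound s a1 a2 b1 b2 k N \<le> gm_loss s a1 a2 b1 b2 k N y w z
        \<and> (gm_loss s a1 a2 b1 b2 k N y w z = gm_bound s a1 a2 b1 b2 k N \<longleftrightarrow>
             (\<forall>i\<in>{1..k}. \<forall>j\<in>{1..k}. i \<noteq> j \<longrightarrow> w i \<bullet> w j = - 1 / (real k - 1))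
             \<and> (\<forall>i\<in>{1..N}. z i = w (y i)))"
    if F: "feasible k N w z" for w z :: "nat \<Rightarrow> real^'d"
    using part1[OF k2 N1 labels classes_nonempty s_pos a1_ge a2_le F] by blast
  obtain w0 :: "nat \<Rightarrow> real^'d" where w0n: "\<forall>j\<in>{1..k}. norm (w0 j) = 1"
    and w0s: "(\<Sum>j=1..k. w0 j) = 0"
    and w0i: "\<forall>i\<in>{1..k}. \<forall>j\<in>{1..k}. i \<noteq> j \<longrightarrow> w0 i \<bullet> w0 j = - 1 / (real k - 1)"
    using etf_exists[OF k2 kd] by blast
  define z0 where "z0 i = w0 (y i)" for i
  have F0: "feasible k N w0 z0"
    unfolding feasible_def z0_def using w0n w0s labels by auto
  have L0: "gm_loss s a1 a2 b1 b2 k N y w0 z0 = gm_bound s a1 a2 b1 b2 k N"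
    using P1[OF F0] w0i by (simp add: z0_def)
  have P2: "class_margin k w = arccos (- 1 / (real k - 1))
              \<and> min_sample_margin k N y w z = real k / (real k - 1)"
    if F: "feasible k N w z"
      and opt: "\<forall>(w' :: nat \<Rightarrow> real^'d) z'. feasible k N w' z' \<longrightarrow>
               gm_loss s a1 a2 b1 b2 k N y w z \<le> gm_loss s a1 a2 b1 b2 k N y w' z'"
    for w z :: "nat \<Rightarrow> real^'d"
  proof -
    have "gm_loss s a1 a2 b1 b2 k N y w z \<le> gm_bound s a1 a2 b1 b2 k N"
    proof -
      have "gm_loss s a1 a2 b1 b2 k N y w z \<le> gm_loss s a1 a2 b1 b2 k N y w0 z0"
        using opt F0 by blast
      then show ?thesis unfolding L0 .
    qed
    then have "gm_loss s a1 a2 b1 b2 k N y w z = gm_bound s a1 a2 b1 b2 k N"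
      using P1[OF F] by linarith
    then have etf: "\<forall>i\<in>{1..k}. \<forall>j\<in>{1..k}. i \<noteq> j \<longrightarrow> w i \<bullet> w j = - 1 / (real k - 1)"
      and zw: "\<forall>i\<in>{1..N}. z i = w (y i)" using P1[OF F] by blast+
    have wn: "\<forall>j\<in>{1..k}. norm (w j) = 1" using F by (simp add: feasible_def)
    have one: "(1::nat) \<in> {1..k}" and two: "(2::nat) \<in> {1..k}" using k2 by auto
    define V where "V = - 1 / (real k - 1)"
    have S: "{w i \<bullet> w j | i j. i \<in> {1..k} \<and> j \<in> {1..k} \<and> i \<noteq> j} = {V}"
    proof (rule set_eqI, rule iffI)
      fix x assume "x \<in> {w i \<bullet> w j | i j. i \<in> {1..k} \<and> j \<in> {1..k} \<and> i \<noteq> j}"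
      then obtain i j where "x = w i \<bullet> w j" "i \<in> {1..k}" "j \<in> {1..k}" "i \<noteq> j" by blast
      then show "x \<in> {V}" using etf by (simp add: V_def)
    next
      fix x assume "x \<in> {V}"
      then have x: "x = V" by simp
      have "w 1 \<bullet> w 2 = V" using etf one two by (simp add: V_def)
      then have "\<exists>i j. x = w i \<bullet> w j \<and> i \<in> {1..k} \<and> j \<in> {1..k} \<and> i \<noteq> j"
        using one two x by (intro exI[of _ 1] exI[of _ 2]) simp
      then show "x \<in> {w i \<bullet> w j | i j. i \<in> {1..k} \<and> j \<in> {1..k} \<and> i \<noteq> j}" by simp
    qed
    have cm: "class_margin k w = arccos (- 1 / (real k - 1))"
      unfolding class_margin_def S by (simp add: V_def)
    have inner_set: "{w j \<bullet> z i | j. j \<in> {1..k} \<and> j \<noteq> y i} = {V}"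
      if i: "i \<in> {1..N}" for i
    proof (rule set_eqI, rule iffI)
      have yi: "y i \<in> {1..k}" using labels i by blast
      have zi: "z i = w (y i)" using zw i by blast
      fix x assume "x \<in> {w j \<bullet> z i | j. j \<in> {1..k} \<and> j \<noteq> y i}"
      then obtain j where "x = w j \<bullet> z i" "j \<in> {1..k}" "j \<noteq> y i" by blast
      then show "x \<in> {V}" using etf yi zi by (simp add: V_def)
    next
      have yi: "y i \<in> {1..k}" using labels i by blast
      have zi: "z i = w (y i)" using zw i by blast
      fix x assume "x \<in> {V}"
      then have x: "x = V" by simp
      obtain j where j: "j \<in> {1..k}" "j \<noteq> y i"
      proof (cases "y i = 1")
        case True show ?thesis by (rule that[of 2]) (use two True in simp_all)
      next
        case False show ?thesis by (rule that[of 1]) (use one False in simp_all)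
      qed
      have "w j \<bullet> z i = V" using etf yi zi j by (simp add: V_def)
      then have "\<exists>j'. x = w j' \<bullet> z i \<and> j' \<in> {1..k} \<and> j' \<noteq> y i"
        using j x by (intro exI[of _ j]) simp
      then show "x \<in> {w j \<bullet> z i | j. j \<in> {1..k} \<and> j \<noteq> y i}" by simp
    qed
    have elt: "w (y i) \<bullet> z i - Max {w j \<bullet> z i | j. j \<in> {1..k} \<and> j \<noteq> y i} = real k / (real k - 1)"
      if i: "i \<in> {1..N}" for i
    proof -
      have yi: "y i \<in> {1..k}" using labels i by blast
      have "w (y i) \<bullet> z i = 1" using zw i wn yi by (simp add: norm_eq_1)
      moreover have "real k - 1 > 0" using k2 by simp
      ultimately show ?thesis unfolding inner_set[OF i] by (simp add: V_def field_simps)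
    qed
    have U: "{w (y i) \<bullet> z i - Max {w j \<bullet> z i | j. j \<in> {1..k} \<and> j \<noteq> y i} | i. i \<in> {1..N}}
        = {real k / (real k - 1)}"
    proof (rule set_eqI, rule iffI)
      fix x assume "x \<in> {w (y i) \<bullet> z i - Max {w j \<bullet> z i | j. j \<in> {1..k} \<and> j \<noteq> y i} | i. i \<in> {1..N}}"
      then obtain i where "x = w (y i) \<bullet> z i - Max {w j \<bullet> z i | j. j \<in> {1..k} \<and> j \<noteq> y i}" "i \<in> {1..N}"
        by blast
      then show "x \<in> {real k / (real k - 1)}" using elt by simp
    next
      fix x assume "x \<in> {real k / (real k - 1)}"
      then have x: "x = real k / (real k - 1)" by simp
      have N1': "(1::nat) \<in> {1..N}" using N1 by simp
      have "\<exists>i. x = w (y i) \<bullet> z i - Max {w j \<bullet> z i | j. j \<in> {1..k} \<and> j \<noteq> y i} \<and> i \<in> {1..N}"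
        using elt[OF N1'] N1' x by (intro exI[of _ 1]) simp
      then show "x \<in> {w (y i) \<bullet> z i - Max {w j \<bullet> z i | j. j \<in> {1..k} \<and> j \<noteq> y i} | i. i \<in> {1..N}}"
        by simp
    qed
    have ms: "min_sample_margin k N y w z = real k / (real k - 1)"
      unfolding min_sample_margin_def U by simp
    show ?thesis using cm ms by blast
  qed
  have A: "\<forall>(w :: nat \<Rightarrow> real^'d) z. feasible k N w z \<longrightarrow>
        gm_loss s a1 a2 b1 b2 k N y w z \<ge> gm_bound s a1 a2 b1 b2 k N
        \<and> (gm_loss s a1 a2 b1 b2 k N y w z = gm_bound s a1 a2 b1 b2 k N \<longleftrightarrow>
             (\<forall>i\<in>{1..k}. \<forall>j\<in>{1..k}. i \<noteq> j \<longrightarrow> w i \<bullet> w j = - 1 / (real k - 1))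
             \<and> (\<forall>i\<in>{1..N}. z i = w (y i)))"
    by (intro allI impI) (rule P1)
  have B: "\<forall>(w :: nat \<Rightarrow> real^'d) z.
          feasible k N w z
          \<and> (\<forall>(w' :: nat \<Rightarrow> real^'d) z'. feasible k N w' z' \<longrightarrow>
               gm_loss s a1 a2 b1 b2 k N y w z \<le> gm_loss s a1 a2 b1 b2 k N y w' z')
          \<longrightarrow> class_margin k w = arccos (- 1 / (real k - 1))
              \<and> min_sample_margin k N y w z = real k / (real k - 1)"
    by (intro allI impI, elim conjE) (rule P2)
  have C: "\<forall>(w :: nat \<Rightarrow> real^'d) z. feasible k N w z \<longrightarrow>
          class_margin k w \<le> arccos (- 1 / (real k - 1))
          \<and> min_sample_margin k N y w z \<le> real k / (real k - 1)"
  proof (intro allI impI)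
    fix w z :: "nat \<Rightarrow> real^'d" assume F: "feasible k N w z"
    show "class_margin k w \<le> arccos (- 1 / (real k - 1))
          \<and> min_sample_margin k N y w z \<le> real k / (real k - 1)"
      using part3[OF k2 N1 labels F] by (rule conjI)
  qed
  show ?thesis by (rule conjI[OF A conjI[OF B C]])
qed

end
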